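(* Let $N\ge 2$ and let $\mu_1,\dots,\mu_N$ be real numbers with $\mu_1\le 0<\mu_2<\mu_3<\cdots<\mu_N$. Let $\delta$ be a sufficiently small positive constant ($0<\delta\ll1$). Let $\pi_1$ satisfy $0<\pi_1\le\frac{\mu_N-\delta}{\mu_N-\mu_1}$. Let $f:\mathbb R^+\to\mathbb R^+$ be a differentiable function with $f'(\mu)\ge 0$ for all $\mu>0$, and let $f(\mu_1)$ denote an arbitrary given real constant. Consider the problem of minimizing $$\Phi(\pi_2,\dots,\pi_N)=\pi_1 f(\mu_1)+\sum_{j=2}^N\pi_j f(\mu_j)$$ over all $(\pi_2,\dots,\pi_N)$ satisfying $$\sum_{j=2}^N\pi_j\mu_j\ge-\pi_1\mu_1+\delta,\qquad \sum_{j=2}^N\pi_j=1-\pi_1,\qquad \pi_j\ge0\ (2\le j\le N).$$ Define $k^*$ as the index in $\{2,\dots,N\}$ with $$\mu_{k^*}=\min\Big\{\mu_k:\ \mu_k>\frac{-\pi_1\mu_1}{1-\pi_1},\ 2\le k\le N\Big\},$$ and for $2\le l<m\le N$ define $$F(\mu_l,\mu_m)=\pi_1 f(\mu_1)+\frac{f(\mu_m)-f(\mu_l)}{\mu_m-\mu_l}(\delta-\pi_1\mu_1)+\frac{\mu_m f(\mu_l)-\mu_l f(\mu_m)}{\mu_m-\mu_l}(1-\pi_1).$$ Then: (1) If $k^*=2$, the minimal value of $\Phi$ under the constraints is $\pi_1 f(\mu_1)+(1-\pi_1)f(\mu_2)$, attained by $\pi_2=1-\pi_1$ and $\pi_j=0$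 for $j\ge3$. (2) If $k^*>2$, the minimal value of $\Phi$ under the constraints is $$\min_{2\le l<k^*\le m\le N}F(\mu_l,\mu_m),$$ and, writing $(l^*,m^* )$ for a minimizing pair, it is attained by $\pi_j=0$ for $j\notin\{l^*,m^*\}$ and $$\begin{pmatrix}\pi_{l^*}\\ \pi_{m^*}\end{pmatrix}=\frac{1}{\mu_{m^*}-\mu_{l^*}}\begin{pmatrix}(\mu_{m^*}-\delta)+\pi_1(\mu_1-\mu_{m^*})\\ -(\mu_{l^*}-\delta)+\pi_1(\mu_{l^*}-\mu_1)\end{pmatrix}.$$
   Context: Interpretation (cyber epidemic model with a fixed attack-defense graph $G$ with adjacency matrix $A$): configurations are $\mathcal C_j=(G,\beta_j,\gamma_j)$ with cure probability $\beta_j$ and infection probability $\gamma_j$; $\lambda_1(A)$ is the eigenvalue of $A$ of largest modulus and $\mu_j=\beta_j-\gamma_j\lambda_1(A)$. $\mathcal C_1$ violates the epidemic-threshold condition $\mu>0$ and the system must stay in it for the portion of time $\pi_1$; $\mathcal C_2,\dots,\mathcal C_N$ are moving-target-defense-induced configurations satisfying $\mu_j>0$, with portions of time $\pi_j$. $f(\mu_j)$ is the cost of inducing $\mathcal C_j$, and the constraint $\sum_{j\ge2}\pi_j\mu_j\ge-\pi_1\mu_1+\delta$ is the (strictified) sufficient condition for the infection dying out. *)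

theory Defs
  imports "HOL-Analysis.Analysis"
begin

text \<open>Configurations are indexed 1..N; mu j is mu_j, p j is pi_j for 2 <= j <= N.
  c is the given constant f(mu_1).\<close>

definition feasible :: "nat \<Rightarrow> (nat \<Rightarrow> real) \<Rightarrow> real \<Rightarrow> real \<Rightarrow> (nat \<Rightarrow> real) \<Rightarrow> bool" where
  "feasible N mu pi1 \<delta> p \<longleftrightarrow>
     (\<Sum>j=2..N. p j * mu j) \<ge> - pi1 * mu 1 + \<delta> \<and>
     (\<Sum>j=2..N. p j) = 1 - pi1 \<and>
     (\<forall>j\<in>{2..N}. p j \<ge> 0)"

definition Phi :: "nat \<Rightarrow> (nat \<Rightarrow> real) \<Rightarrow> (real \<Rightarrow> real) \<Rightarrow> real \<Rightarrow> real \<Rightarrow> (nat \<Rightarrow> real) \<Rightarrow> real" where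
  "Phi N mu f c pi1 p = pi1 * c + (\<Sum>j=2..N. p j * f (mu j))"

definition kstar :: "nat \<Rightarrow> (nat \<Rightarrow> real) \<Rightarrow> real \<Rightarrow> nat" where
  "kstar N mu pi1 = (THE k. k \<in> {2..N} \<and>
      mu k = Min {mu k' | k'. k' \<in> {2..N} \<and> mu k' > - pi1 * mu 1 / (1 - pi1)})"

definition Fpair :: "(nat \<Rightarrow> real) \<Rightarrow> (real \<Rightarrow> real) \<Rightarrow> real \<Rightarrow> real \<Rightarrow> real \<Rightarrow> nat \<Rightarrow> nat \<Rightarrow> real" where
  "Fpair mu f c pi1 \<delta> l m =
     pi1 * c
     + (f (mu m) - f (mu l)) / (mu m - mu l) * (\<delta> - pi1 * mu 1)
     + (mu m * f (mu l) - mu l * f (mu m)) / (mu m - mu l) * (1 - pi1)"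

end

theory Submission
  imports Defs
begin

lemma fmono:
  fixes f :: "real \<Rightarrow> real"
  assumes "\<forall>x>0. f differentiable (at x)" "\<forall>x>0. deriv f x \<ge> 0" "0 < a" "a \<le> b"
  shows "f a \<le> f b"
proof (rule DERIV_nonneg_imp_nondecreasing[OF assms(4)])
  fix x assume x: "a \<le> x" "x \<le> b"
  hence "x > 0" using assms by simp
  then obtain D where D: "DERIV f x :> D" using assms(1) real_differentiableE by blast
  hence "deriv f x = D" by (rule DERIV_imp_deriv)
  thus "\<exists>y. DERIV f x :> y \<and> y \<ge> 0" using D assms(2) \<open>x > 0\<close> by auto
qed

lemma sum_two:
  fixes w :: "nat \<Rightarrow> real"
  assumes "finite A" "l \<in> A" "m \<in> A" "l \<noteq> m"
  shows "(\<Sum>j\<in>A. (if j = l then X else if j = m then Y else 0) * w j) = X * w l + Y * w m"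
proof -
  have "(\<Sum>j\<in>A. (if j = l then X else if j = m then Y else 0) * w j)
      = (\<Sum>j\<in>{l,m}. (if j = l then X else if j = m then Y else 0) * w j)"
    by (rule sum.mono_neutral_right) (use assms in auto)
  thus ?thesis using assms by simp
qed

lemma sum_one:
  fixes w :: "nat \<Rightarrow> real"
  assumes "finite A" "l \<in> A"
  shows "(\<Sum>j\<in>A. (if j = l then X else 0) * w j) = X * w l"
proof -
  have "(\<Sum>j\<in>A. (if j = l then X else 0) * w j)
      = (\<Sum>j\<in>{l}. (if j = l then X else 0) * w j)"
    by (rule sum.mono_neutral_right) (use assms in auto)
  thus ?thesis using assms by simp
qed

lemma chord:
  fixes ss tt aa bb mi mj ei ej :: real
  assumes "mi < mj"
  shows "(ss*mj - tt)/(mj - mi)*(aa + bb*mi - ei) + (tt - ss*mi)/(mj - mi)*(aa + bb*mj - ej)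
       = aa * ss + bb*tt - (ei*(ss*mj - tt) + ej*(tt - ss*mi))/(mj - mi)"
proof -
  have d: "mj - mi \<noteq> 0" using assms by simp
  have "(ss*mj - tt)/(mj - mi)*(aa + bb*mi - ei) + (tt - ss*mi)/(mj - mi)*(aa + bb*mj - ej)
     = ((ss*mj - tt)*(aa + bb*mi - ei) + (tt - ss*mi)*(aa + bb*mj - ej))/(mj - mi)"
    by (simp add: add_divide_distrib)
  also have "\<dots> = ((aa * ss + bb*tt)*(mj - mi) - (ei*(ss*mj - tt) + ej*(tt - ss*mi)))/(mj - mi)"
    by (rule arg_cong[where f = "\<lambda>x. x/(mj-mi)"]) (simp add: algebra_simps)
  also have "\<dots> = aa * ss + bb*tt - (ei*(ss*mj - tt) + ej*(tt - ss*mi))/(mj - mi)"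
    using d by (simp add: diff_divide_distrib)
  finally show ?thesis .
qed

lemma Fpair_alt:
  assumes "mu l \<noteq> mu m"
  shows "Fpair mu f c pi1 \<delta> l m = pi1*c + ((1-pi1)*mu m - (\<delta> - pi1*mu 1))/(mu m - mu l) * f (mu l)
     + ((\<delta> - pi1*mu 1) - (1-pi1)*mu l)/(mu m - mu l) * f (mu m)"
  using assms unfolding Fpair_def by (simp add: field_simps)

theorem theorem3:
  fixes N :: nat and mu :: "nat \<Rightarrow> real" and f :: "real \<Rightarrow> real" and c pi1 :: real
  assumes hN: "N \<ge> 2"
    and hmu1: "mu 1 \<le> 0" and hmu2: "0 < mu 2"
    and hmono: "strict_mono_on {2..N} mu"
    and hpi1: "0 < pi1"
    and hfpos: "\<forall>x>0. f x > 0"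
    and hfdiff: "\<forall>x>0. f differentiable (at x)"
    and hfderiv: "\<forall>x>0. deriv f x \<ge> 0"
  shows "\<exists>\<delta>0>0. \<forall>\<delta>. 0 < \<delta> \<and> \<delta> < \<delta>0 \<and> pi1 \<le> (mu N - \<delta>) / (mu N - mu 1) \<longrightarrow>
    (kstar N mu pi1 = 2 \<longrightarrow>
       (let p = (\<lambda>j. if j = 2 then 1 - pi1 else 0) in
          feasible N mu pi1 \<delta> p \<and>
          Phi N mu f c pi1 p = pi1 * c + (1 - pi1) * f (mu 2)) \<and>
       (\<forall>p. feasible N mu pi1 \<delta> p \<longrightarrow>
          Phi N mu f c pi1 p \<ge> pi1 * c + (1 - pi1) * f (mu 2))) \<and>
    (kstar N mu pi1 > 2 \<longrightarrow>
       (let k = kstar N mu pi1;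
            V = Min {Fpair mu f c pi1 \<delta> l m | l m. 2 \<le> l \<and> l < k \<and> k \<le> m \<and> m \<le> N} in
          (\<forall>p. feasible N mu pi1 \<delta> p \<longrightarrow> Phi N mu f c pi1 p \<ge> V) \<and>
          (\<forall>l m. 2 \<le> l \<and> l < k \<and> k \<le> m \<and> m \<le> N \<and> Fpair mu f c pi1 \<delta> l m = V \<longrightarrow>
             (let p = (\<lambda>j. if j = l then ((mu m - \<delta>) + pi1 * (mu 1 - mu m)) / (mu m - mu l)
                           else if j = m then (- (mu l - \<delta>) + pi1 * (mu l - mu 1)) / (mu m - mu l)
                           else 0) in
                feasible N mu pi1 \<delta> p \<and> Phi N mu f c pi1 p = V))))"
  proof -
  define s where "s = 1 - pi1"
  define D where "D = {s*mu j + pi1*mu 1 | j. j \<in> {2..N} \<and> s*mu j + pi1*mu 1 > 0}"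
  define \<delta>0 where "\<delta>0 = Min (insert 1 D)"
  have finD: "finite D"
  proof -
    have "D \<subseteq> (\<lambda>j. s*mu j + pi1*mu 1) ` {2..N}" unfolding D_def by auto
    thus ?thesis by (rule finite_subset) simp
  qed
  have \<delta>0pos: "\<delta>0 > 0" using finD unfolding \<delta>0_def by (auto simp: D_def)
  have \<delta>0le: "\<delta>0 \<le> s*mu j + pi1*mu 1" if "j \<in> {2..N}" "s*mu j + pi1*mu 1 > 0" for j
    unfolding \<delta>0_def using finD that by (intro Min_le) (auto simp: D_def)
  have mulessI: "mu i < mu j" if "i \<in> {2..N}" "j \<in> {2..N}" "i < j" for i j
    using hmono that by (auto simp: strict_mono_on_def)
  have mupos: "mu j > 0" if "j \<in> {2..N}" for j
  proof (cases "j = 2")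
    case True thus ?thesis using hmu2 by simp
  next
    case False
    hence "mu 2 < mu j" using that hN by (intro mulessI) auto
    thus ?thesis using hmu2 by simp
  qed
  have fle: "f (mu i) \<le> f (mu j)" if "i \<in> {2..N}" "j \<in> {2..N}" "i \<le> j" for i j
  proof (cases "i = j")
    case False
    hence "mu i < mu j" using that by (intro mulessI) auto
    thus ?thesis using fmono[OF hfdiff hfderiv mupos[OF that(1)]] by simp
  qed simp
  have NN: "N \<in> {2..N}" using hN by simp
  show ?thesis
  proof (rule exI[of _ \<delta>0], rule conjI[OF \<delta>0pos], intro allI impI)
    fix \<delta> assume h\<delta>: "0 < \<delta> \<and> \<delta> < \<delta>0 \<and> pi1 \<le> (mu N - \<delta>) / (mu N - mu 1)"
    have muNpos: "mu N > 0" using mupos[OF NN] .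
    have md: "mu N - mu 1 > 0" using muNpos hmu1 by simp
    have hc: "pi1 * (mu N - mu 1) \<le> mu N - \<delta>" using h\<delta> md by (simp add: le_divide_eq)
    have spos: "s > 0"
    proof (rule ccontr)
      assume "\<not> s > 0" hence "pi1 \<ge> 1" by (simp add: s_def)
      hence "pi1 * mu N \<ge> mu N" using muNpos by simp
      moreover have "- pi1 * mu 1 \<ge> 0" using hpi1 hmu1 by (simp add: mult_nonneg_nonpos)
      ultimately show False using hc h\<delta> by (simp add: algebra_simps)
    qed
    have hNc: "\<delta> \<le> s * mu N + pi1 * mu 1" using hc by (simp add: s_def algebra_simps)
    have gtq: "mu j > - pi1 * mu 1 / (1 - pi1) \<longleftrightarrow> s*mu j + pi1*mu 1 > 0" for j
    proof -
      have e1: "- pi1 * mu 1 / (1 - pi1) = (- (pi1 * mu 1)) / s" by (simp add: s_def)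
      have e2: "(- (pi1 * mu 1)) / s < mu j \<longleftrightarrow> - (pi1 * mu 1) < mu j * s"
        by (rule pos_divide_less_eq[OF spos])
      have e3: "- (pi1 * mu 1) < mu j * s \<longleftrightarrow> 0 < s*mu j + pi1*mu 1"
        by (auto simp: algebra_simps)
      show ?thesis unfolding e1 e2 e3 ..
    qed
    define S where "S = {mu k' | k'. k' \<in> {2..N} \<and> mu k' > - pi1 * mu 1 / (1 - pi1)}"
    have finS: "finite S" unfolding S_def by simp
    have "mu N \<in> S" unfolding S_def using NN gtq hNc h\<delta> by auto
    hence neS: "S \<noteq> {}" by auto
    have "Min S \<in> S" using finS neS by (rule Min_in)
    then obtain k0 where k0: "k0 \<in> {2..N}" "mu k0 = Min S" "s*mu k0 + pi1*mu 1 > 0"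
      unfolding S_def using gtq by auto
    have kst: "kstar N mu pi1 = k0"
      unfolding kstar_def S_def[symmetric]
    proof (rule the_equality)
      show "k0 \<in> {2..N} \<and> mu k0 = Min S" using k0 by simp
    next
      fix k assume k: "k \<in> {2..N} \<and> mu k = Min S"
      show "k = k0"
      proof (rule ccontr)
        assume "k \<noteq> k0"
        hence "k < k0 \<or> k0 < k" by auto
        thus False using mulessI k k0 by fastforce
      qed
    qed
    have below: "s*mu j + pi1*mu 1 \<le> 0" if "j \<in> {2..N}" "j < k0" for j
    proof (rule ccontr)
      assume "\<not> s*mu j + pi1*mu 1 \<le> 0"
      hence "mu j \<in> S" unfolding S_def using gtq that by auto
      hence "Min S \<le> mu j" using finS by simp
      moreover have "mu j < mu k0" using mulessI[of j k0] that k0(1) by simp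
      ultimately show False using k0 by simp
    qed
    have above: "s*mu j + pi1*mu 1 - \<delta> > 0" if "j \<in> {2..N}" "k0 \<le> j" for j
    proof -
      have "mu k0 \<le> mu j"
        using that k0 mulessI[of k0 j] by (cases "k0 = j") auto
      hence "s*mu k0 \<le> s*mu j" using spos by simp
      hence pos: "s*mu j + pi1*mu 1 > 0" using k0 by simp
      have "\<delta> < s*mu j + pi1*mu 1" using \<delta>0le[OF that(1) pos] h\<delta> by simp
      thus ?thesis by simp
    qed
    define t where "t = \<delta> - pi1 * mu 1"
    have Falt: "Fpair mu f c pi1 \<delta> l m = pi1*c + (s*mu m - t)/(mu m - mu l) * f (mu l)
        + (t - s*mu l)/(mu m - mu l) * f (mu m)" if "mu l \<noteq> mu m" for l m
      using Fpair_alt[OF that, of f c pi1 \<delta>] by (simp add: s_def t_def)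
    have finI: "finite {2..N}" by simp
    show "(kstar N mu pi1 = 2 \<longrightarrow>
       (let p = (\<lambda>j. if j = 2 then 1 - pi1 else 0) in
          feasible N mu pi1 \<delta> p \<and>
          Phi N mu f c pi1 p = pi1 * c + (1 - pi1) * f (mu 2)) \<and>
       (\<forall>p. feasible N mu pi1 \<delta> p \<longrightarrow>
          Phi N mu f c pi1 p \<ge> pi1 * c + (1 - pi1) * f (mu 2))) \<and>
    (kstar N mu pi1 > 2 \<longrightarrow>
       (let k = kstar N mu pi1;
            V = Min {Fpair mu f c pi1 \<delta> l m | l m. 2 \<le> l \<and> l < k \<and> k \<le> m \<and> m \<le> N} in
          (\<forall>p. feasible N mu pi1 \<delta> p \<longrightarrow> Phi N mu f c pi1 p \<ge> V) \<and>
          (\<forall>l m. 2 \<le> l \<and> l < k \<and> k \<le> m \<and> m \<le> N \<and> Fpair mu f c pi1 \<delta> l m = V \<longrightarrow>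
             (let p = (\<lambda>j. if j = l then ((mu m - \<delta>) + pi1 * (mu 1 - mu m)) / (mu m - mu l)
                           else if j = m then (- (mu l - \<delta>) + pi1 * (mu l - mu 1)) / (mu m - mu l)
                           else 0) in
                feasible N mu pi1 \<delta> p \<and> Phi N mu f c pi1 p = V))))"
    proof (intro conjI impI)
      assume "kstar N mu pi1 = 2"
      hence k2: "k0 = 2" using kst by simp
      have I2: "2 \<in> {2..N}" using hN by simp
      let ?p = "\<lambda>j::nat. if j = 2 then 1 - pi1 else (0::real)"
      have e1: "(\<Sum>j=2..N. ?p j * mu j) = s * mu 2"
        using sum_one[OF finI I2, of "1 - pi1" mu] by (simp add: s_def)
      have e2: "(\<Sum>j=2..N. ?p j) = s"
        using sum_one[OF finI I2, of "1 - pi1" "\<lambda>_. 1"] by (simp add: s_def)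
      have e3: "(\<Sum>j=2..N. ?p j * f (mu j)) = s * f (mu 2)"
        using sum_one[OF finI I2, of "1 - pi1" "\<lambda>j. f (mu j)"] by (simp add: s_def)
      have "s*mu 2 + pi1*mu 1 - \<delta> > 0" using above[OF I2] k2 by simp
      hence "feasible N mu pi1 \<delta> ?p" unfolding feasible_def using e1 e2 spos
        by (auto simp: s_def)
      moreover have "Phi N mu f c pi1 ?p = pi1 * c + (1 - pi1) * f (mu 2)"
        unfolding Phi_def using e3 by (simp add: s_def)
      ultimately show "let p = ?p in feasible N mu pi1 \<delta> p \<and>
          Phi N mu f c pi1 p = pi1 * c + (1 - pi1) * f (mu 2)" by simp
    next
      assume "kstar N mu pi1 = 2"
      show "\<forall>p. feasible N mu pi1 \<delta> p \<longrightarrow>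
          Phi N mu f c pi1 p \<ge> pi1 * c + (1 - pi1) * f (mu 2)"
      proof (intro allI impI)
        fix p assume fp: "feasible N mu pi1 \<delta> p"
        have "(\<Sum>j=2..N. p j * f (mu 2)) \<le> (\<Sum>j=2..N. p j * f (mu j))"
          using fp fle hN by (intro sum_mono mult_left_mono) (auto simp: feasible_def)
        moreover have "(\<Sum>j=2..N. p j * f (mu 2)) = (1 - pi1) * f (mu 2)"
          using fp by (simp add: feasible_def sum_distrib_right[symmetric])
        ultimately show "Phi N mu f c pi1 p \<ge> pi1 * c + (1 - pi1) * f (mu 2)"
          unfolding Phi_def by simp
      qed
    next
      assume "kstar N mu pi1 > 2"
      hence k2: "k0 > 2" using kst by simp
      define P where "P = {Fpair mu f c pi1 \<delta> l m | l m. 2 \<le> l \<and> l < k0 \<and> k0 \<le> m \<and> m \<le> N}"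
      have finP: "finite P"
      proof -
        have "P \<subseteq> (\<lambda>(l,m). Fpair mu f c pi1 \<delta> l m) ` ({2..N} \<times> {2..N})"
          unfolding P_def by auto
        thus ?thesis by (rule finite_subset) simp
      qed
      have neP: "P \<noteq> {}" unfolding P_def using k2 k0 by auto
      have VleF: "Min P \<le> Fpair mu f c pi1 \<delta> l m" if "2 \<le> l" "l < k0" "k0 \<le> m" "m \<le> N" for l m
        using finP that unfolding P_def by (intro Min_le) auto
      have "Min P \<in> P" using finP neP by (rule Min_in)
      then obtain l m where lm: "2 \<le> l" "l < k0" "k0 \<le> m" "m \<le> N"
          "Fpair mu f c pi1 \<delta> l m = Min P" unfolding P_def by auto
      have lI: "l \<in> {2..N}" and mI: "m \<in> {2..N}" using lm k0 by auto
      have mlm: "mu l < mu m" using mulessI lI mI lm by simp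
      define b where "b = (f (mu m) - f (mu l)) / (mu m - mu l)"
      define a where "a = f (mu l) - b * mu l"
      have bnn: "b \<ge> 0" unfolding b_def using fle[OF lI mI] lm mlm by simp
      have gl: "f (mu l) = a + b * mu l - 0" by (simp add: a_def)
      have bd: "b*mu m - b*mu l = f (mu m) - f (mu l)"
      proof -
        have "b*mu m - b*mu l = b*(mu m - mu l)" by (simp add: algebra_simps)
        also have "\<dots> = f (mu m) - f (mu l)" unfolding b_def using mlm by simp
        finally show ?thesis .
      qed
      have gm: "f (mu m) = a + b * mu m - 0" using bd by (simp add: a_def)
      have Flm: "Fpair mu f c pi1 \<delta> l m = pi1*c + (a * s + b*t)"
        using Falt[of l m] mlm chord[OF mlm, of s t a b 0 0] gl gm by simp
      have tl: "t - s*mu l > 0" using below[OF lI lm(2)] h\<delta> by (simp add: t_def)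
      have tm: "s*mu m - t > 0" using above[OF mI lm(3)] by (simp add: t_def)
      have line: "f (mu j) \<ge> a + b * mu j" if jI: "j \<in> {2..N}" for j
      proof (rule ccontr)
        assume "\<not> f (mu j) \<ge> a + b * mu j"
        then obtain e where e: "e > 0" "f (mu j) = a + b * mu j - e"
          by (intro that[of "a + b * mu j - f (mu j)"]) auto
        have jl: "j \<noteq> l" using e gl by auto
        have jm: "j \<noteq> m" using e gm by auto
        show False
        proof (cases "j < k0")
          case True
          have mjm: "mu j < mu m" using mulessI jI mI True lm by simp
          have tj: "s*mu m - t > 0" using tm .
          have "Fpair mu f c pi1 \<delta> j m = pi1*c + (a * s + b*t - (e*(s*mu m - t) + 0*(t - s*mu j))/(mu m - mu j))"
            using Falt[of j m] mjm chord[OF mjm, of s t a b e 0] e gm by simp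
          moreover have "e*(s*mu m - t)/(mu m - mu j) > 0" using e tj mjm by simp
          moreover have "Min P \<le> Fpair mu f c pi1 \<delta> j m" using VleF[of j m] jI True lm by simp
          ultimately show False using lm(5) Flm by simp
        next
          case False
          have mlj: "mu l < mu j" using mulessI jI lI False lm by simp
          have "Fpair mu f c pi1 \<delta> l j = pi1*c + (a * s + b*t - (0*(s*mu j - t) + e*(t - s*mu l))/(mu j - mu l))"
            using Falt[of l j] mlj chord[OF mlj, of s t a b 0 e] e gl by simp
          moreover have "e*(t - s*mu l)/(mu j - mu l) > 0" using e tl mlj by simp
          moreover have "Min P \<le> Fpair mu f c pi1 \<delta> l j" using VleF[of l j] jI False lm by simp
          ultimately show False using lm(5) Flm by simp
        qed
      qed
      have lower: "Phi N mu f c pi1 p \<ge> Min P" if fp: "feasible N mu pi1 \<delta> p" for p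
      proof -
        have "(\<Sum>j=2..N. p j * (a + b * mu j)) \<le> (\<Sum>j=2..N. p j * f (mu j))"
          using fp line by (intro sum_mono mult_left_mono) (auto simp: feasible_def)
        moreover have "(\<Sum>j=2..N. p j * (a + b * mu j)) = a * (\<Sum>j=2..N. p j) + b * (\<Sum>j=2..N. p j * mu j)"
          by (simp add: algebra_simps sum.distrib sum_distrib_left)
        moreover have "b * (\<Sum>j=2..N. p j * mu j) \<ge> b * t"
          using fp bnn by (intro mult_left_mono) (auto simp: feasible_def t_def)
        moreover have "(\<Sum>j=2..N. p j) = s" using fp by (simp add: feasible_def s_def)
        ultimately show ?thesis unfolding Phi_def using lm(5) Flm by simp
      qed
      have attain: "feasible N mu pi1 \<delta> p \<and> Phi N mu f c pi1 p = Min P"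
        if l'm': "2 \<le> l'" "l' < k0" "k0 \<le> m'" "m' \<le> N" "Fpair mu f c pi1 \<delta> l' m' = Min P"
          and pdef: "p = (\<lambda>j. if j = l' then ((mu m' - \<delta>) + pi1 * (mu 1 - mu m')) / (mu m' - mu l')
                           else if j = m' then (- (mu l' - \<delta>) + pi1 * (mu l' - mu 1)) / (mu m' - mu l')
                           else 0)" for l' m' p
      proof -
        have lI': "l' \<in> {2..N}" and mI': "m' \<in> {2..N}" using l'm' k0 by auto
        have ne: "l' \<noteq> m'" using l'm' by simp
        have mlm': "mu l' < mu m'" using mulessI lI' mI' l'm' by simp
        define X where "X = (s*mu m' - t)/(mu m' - mu l')"
        define Y where "Y = (t - s*mu l')/(mu m' - mu l')"
        have pXY: "p = (\<lambda>j. if j = l' then X else if j = m' then Y else 0)"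
      proof -
          have n1: "mu m' - \<delta> + pi1 * (mu 1 - mu m') = s*mu m' - t"
            unfolding s_def t_def by (simp add: algebra_simps)
          have n2: "- (mu l' - \<delta>) + pi1 * (mu l' - mu 1) = t - s*mu l'"
            unfolding s_def t_def by (simp add: algebra_simps)
          show ?thesis unfolding pdef X_def Y_def n1 n2 ..
        qed
        have tl': "t - s*mu l' > 0" using below[OF lI' l'm'(2)] h\<delta> by (simp add: t_def)
        have tm': "s*mu m' - t > 0" using above[OF mI' l'm'(3)] by (simp add: t_def)
        have X0: "X \<ge> 0" unfolding X_def using tm' mlm' by simp
        have Y0: "Y \<ge> 0" unfolding Y_def using tl' mlm' by simp
        have s1: "(\<Sum>j=2..N. p j) = X + Y"
          using sum_two[OF finI lI' mI' ne, of X Y "\<lambda>_. 1"] by (simp add: pXY)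
        have s2: "(\<Sum>j=2..N. p j * mu j) = X * mu l' + Y * mu m'"
          using sum_two[OF finI lI' mI' ne, of X Y mu] by (simp add: pXY)
        have s3: "(\<Sum>j=2..N. p j * f (mu j)) = X * f (mu l') + Y * f (mu m')"
          using sum_two[OF finI lI' mI' ne, of X Y "\<lambda>j. f (mu j)"] by (simp add: pXY)
        have "X + Y = s"
        proof -
          have "X + Y = (s*(mu m' - mu l'))/(mu m' - mu l')" unfolding X_def Y_def
            by (simp add: add_divide_distrib[symmetric] algebra_simps)
          thus ?thesis using mlm' by simp
        qed
        moreover have "X * mu l' + Y * mu m' = t"
        proof -
          have "X * mu l' + Y * mu m' = ((s*mu m' - t)*mu l' + (t - s*mu l')*mu m')/(mu m' - mu l')"
            unfolding X_def Y_def by (simp add: add_divide_distrib)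
          also have "\<dots> = (t*(mu m' - mu l'))/(mu m' - mu l')"
            by (rule arg_cong[where f = "\<lambda>x. x/(mu m' - mu l')"]) (simp add: algebra_simps)
          finally show ?thesis using mlm' by simp
        qed
        moreover have "\<forall>j\<in>{2..N}. p j \<ge> 0" using X0 Y0 by (simp add: pXY)
        ultimately have "feasible N mu pi1 \<delta> p" unfolding feasible_def using s1 s2
          by (simp add: s_def t_def)
        moreover have "Phi N mu f c pi1 p = Min P"
          unfolding Phi_def using s3 Falt[of l' m'] mlm' l'm'(5) by (simp add: X_def Y_def)
        ultimately show ?thesis by simp
      qed
      show "let k = kstar N mu pi1;
            V = Min {Fpair mu f c pi1 \<delta> l m | l m. 2 \<le> l \<and> l < k \<and> k \<le> m \<and> m \<le> N} in
          (\<forall>p. feasible N mu pi1 \<delta> p \<longrightarrow> Phi N mu f c pi1 p \<ge> V) \<and>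
          (\<forall>l m. 2 \<le> l \<and> l < k \<and> k \<le> m \<and> m \<le> N \<and> Fpair mu f c pi1 \<delta> l m = V \<longrightarrow>
             (let p = (\<lambda>j. if j = l then ((mu m - \<delta>) + pi1 * (mu 1 - mu m)) / (mu m - mu l)
                           else if j = m then (- (mu l - \<delta>) + pi1 * (mu l - mu 1)) / (mu m - mu l)
                           else 0) in
                feasible N mu pi1 \<delta> p \<and> Phi N mu f c pi1 p = V))"
        unfolding Let_def kst P_def[symmetric]
        using lower attain by blast
    qed
  qed
qed

end
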